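(* Let $f:\mathbb{R}\to\mathbb{R}$ be a Lebesgue measurable function such that $f(x+y)-f(x)-f(y)\in\pi\mathbb{Z}$ for almost every $(x,y)\in\mathbb{R}^2$ (with respect to Lebesgue measure on $\mathbb{R}^2$). Then there exist $c\in\mathbb{R}$ and a function $k:\mathbb{R}\to\pi\mathbb{Z}$ such that $f(x)=cx+k(x)$ for almost every $x\in\mathbb{R}$. *)

theory Defs
  imports "HOL-Analysis.Analysis"
begin

end

theory Submission
  imports Defs "HOL-Analysis.Analysis"
begin


lemma ae_dense:
  assumes "AE x in lebesgue. P (x::real)" "e > 0"
  shows "\<exists>x. P x \<and> dist x x0 < e"
proof -
  obtain N where N: "negligible N" "{x. \<not> P x} \<subseteq> N"
    using assms(1) eventually_ae_filter_negligible by blast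
  have "\<not> ball x0 e \<subseteq> N"
  proof
    assume "ball x0 e \<subseteq> N"
    then have "negligible (ball x0 e)" using N negligible_subset by blast
    then show False using open_not_negligible[of "ball x0 e"] assms(2) by auto
  qed
  then obtain x where "x \<in> ball x0 e" "x \<notin> N" by blast
  then show ?thesis using N by (auto simp: dist_commute)
qed

lemma cont_eq_dense:
  fixes h1 h2 :: "real \<Rightarrow> 'b::real_normed_vector"
  assumes dense: "\<And>x0 e. e > 0 \<Longrightarrow> \<exists>x. P x \<and> dist x x0 < e"
    and c1: "continuous_on UNIV h1" and c2: "continuous_on UNIV h2"
    and eq: "\<And>x. P x \<Longrightarrow> h1 x = h2 x"
  shows "h1 x0 = h2 x0"
proof (rule ccontr)
  assume ne: "h1 x0 \<noteq> h2 x0"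
  let ?h = "\<lambda>x. h1 x - h2 x"
  have "continuous_on UNIV ?h" using c1 c2 by (intro continuous_intros)
  then have "isCont ?h x0" by (simp add: continuous_on_eq_continuous_at)
  moreover have "norm (?h x0) > 0" using ne by simp
  ultimately obtain d where d: "d > 0" "\<And>x. dist x x0 < d \<Longrightarrow> dist (?h x) (?h x0) < norm (?h x0)"
    unfolding continuous_at_eps_delta by metis
  obtain x where "P x" "dist x x0 < d" using dense d(1) by blast
  then have "dist (?h x) (?h x0) < norm (?h x0)" using d by blast
  moreover have "?h x = 0" using eq \<open>P x\<close> by simp
  ultimately show False by simp
qed

lemma cont_ae_eq:
  fixes h1 h2 :: "real \<Rightarrow> 'b::real_normed_vector"
  assumes "continuous_on UNIV h1" "continuous_on UNIV h2" "AE x in lebesgue. h1 x = h2 x"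
  shows "h1 x0 = h2 x0"
  using cont_eq_dense[of "\<lambda>x. h1 x = h2 x" h1 h2 x0] ae_dense[OF assms(3)] assms(1,2) by blast

lemma ae_translate:
  assumes "AE y in lebesgue. P (y::real)"
  shows "AE y in lebesgue. P (x + y)"
proof -
  obtain N where N: "negligible N" "{x. \<not> P x} \<subseteq> N"
    using assms eventually_ae_filter_negligible by blast
  have "{y. \<not> P (x + y)} \<subseteq> (+) (-x) ` N"
  proof
    fix y assume "y \<in> {y. \<not> P (x + y)}"
    then have "x + y \<in> N" using N by auto
    then show "y \<in> (+) (-x) ` N" by (auto intro!: image_eqI[where x="x+y"])
  qed
  then show ?thesis using negligible_translation[OF N(1), of "-x"]
    by (auto simp: eventually_ae_filter_negligible)
qed

lemma additive_linear:
  fixes M :: "real \<Rightarrow> complex"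
  assumes add: "\<And>x y. M (x + y) = M x + M y" and c: "continuous_on UNIV M"
  shows "M x = of_real x * M 1"
proof -
  have M0: "M 0 = 0" using add[of 0 0] by simp
  have Mn: "M (of_nat n * y) = of_nat n * M y" for n y
    by (induction n) (auto simp: M0 distrib_right add)
  have Mneg: "M (- y) = - M y" for y using add[of y "-y"] M0 by (simp add: add_eq_0_iff)
  have Mi: "M (of_int k * y) = of_int k * M y" for k y
  proof (cases "k \<ge> 0")
    case True then show ?thesis using Mn[of "nat k" y] by simp
  next
    case False
    then have "of_int k * y = - (of_nat (nat (-k)) * y)" by simp
    then show ?thesis using Mn[of "nat (-k)" y] Mneg False by simp
  qed
  have Mq: "M q = of_real q * M 1" if qQ: "q \<in> \<rat>" for q
  proof -
    obtain a b where ab: "b > 0" "q = of_int a / of_int b"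
      using Rats_cases'[OF qQ] by blast
    have "of_int b * M q = M (of_int b * q)" by (simp add: Mi)
    also have "of_int b * q = of_int a * 1" using ab by simp
    also have "M (of_int a * 1) = of_int a * M 1" by (rule Mi)
    finally have eq: "complex_of_int b * M q = complex_of_int a * M 1" .
    have bnz: "complex_of_int b \<noteq> 0" using ab(1) by simp
    have "M q = complex_of_int a / complex_of_int b * M 1" using eq bnz by (simp add: field_simps)
    also have "complex_of_int a / complex_of_int b = complex_of_real q" using ab(2) by simp
    finally show ?thesis .
  qed
  show ?thesis
  proof (rule cont_eq_dense[of "\<lambda>q. q \<in> \<rat>" M "\<lambda>x. complex_of_real x * M 1"])
    show "\<exists>q. q \<in> \<rat> \<and> dist q x0 < e" if epos: "e > 0" for x0 e :: real
    proof -
      obtain q where "q \<in> \<rat>" "x0 < q" "q < x0 + e" using Rats_dense_in_real[of x0 "x0 + e"] epos by auto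
      then show ?thesis by (intro exI[of _ q]) (auto simp: dist_real_def)
    qed
  next
    show "continuous_on UNIV M" by (rule c)
  next
    show "continuous_on UNIV (\<lambda>x. complex_of_real x * M 1)" by (intro continuous_intros)
  next
    fix q :: real assume "q \<in> \<rat>" then show "M q = complex_of_real q * M 1" by (rule Mq)
  qed
qed



lemma key_exp:
  assumes "f1 - f2 - f3 = pi * of_int m"
  shows "exp (\<i> * complex_of_real (2*f1)) = exp (\<i> * complex_of_real (2*f2)) * exp (\<i> * complex_of_real (2*f3))"
proof -
  have "f1 = f2 + f3 + pi * of_int m" using assms by simp
  then have "\<i> * complex_of_real (2*f1) = \<i> * complex_of_real (2*f2) + \<i> * complex_of_real (2*f3) + (2 * of_int m * pi) * \<i>"
    by (simp add: algebra_simps)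
  then have "exp (\<i> * complex_of_real (2*f1)) = exp (\<i> * complex_of_real (2*f2)) * exp (\<i> * complex_of_real (2*f3)) * exp ((2 * of_int m * pi) * \<i>)"
    by (simp add: exp_add)
  also have "exp ((2 * of_int m * pi) * \<i>) = 1" by (rule exp_integer_2pi) simp
  finally show ?thesis by simp
qed

lemma g_integrable:
  fixes g :: "real \<Rightarrow> complex"
  assumes "g \<in> borel_measurable lebesgue" "\<And>x. norm (g x) \<le> 1"
  shows "g integrable_on {a..b}"
  by (rule measurable_bounded_by_integrable_imp_integrable[where g="\<lambda>_. 1"])
     (use assms in \<open>auto intro: measurable_restrict_space1\<close>)

lemma cont_window:
  fixes g :: "real \<Rightarrow> complex"
  assumes gi: "\<And>a b. g integrable_on {a..b}" and ab: "a \<le> b"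
  shows "continuous_on UNIV (\<lambda>x. integral {x+a..x+b} g)"
proof -
  have "isCont (\<lambda>x. integral {x+a..x+b} g) x0" for x0
  proof (unfold continuous_at_eps_delta, intro allI impI)
    fix e :: real assume e: "e > 0"
    obtain \<delta> where \<delta>: "0 < \<delta>"
      "\<And>c' d'. \<lbrakk>c' \<in> cbox (x0+a-1) (x0+b+1); d' \<in> cbox (x0+a-1) (x0+b+1);
                 norm(c' - (x0+a)) \<le> \<delta>; norm(d' - (x0+b)) \<le> \<delta>\<rbrakk>
                        \<Longrightarrow> norm(integral(cbox c' d') g - integral(cbox (x0+a) (x0+b)) g) < e"
      using indefinite_integral_continuous[of g "x0+a-1" "x0+b+1" "x0+a" "x0+b" e] gi[of "x0+a-1" "x0+b+1"] ab e
      by auto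
    show "\<exists>d>0. \<forall>x. dist x x0 < d \<longrightarrow> dist (integral {x + a..x + b} g) (integral {x0 + a..x0 + b} g) < e"
    proof (intro exI[of _ "min \<delta> 1"] conjI allI impI)
      fix x assume "dist x x0 < min \<delta> 1"
      then have "\<bar>x - x0\<bar> < \<delta>" "\<bar>x - x0\<bar> < 1" by (auto simp: dist_real_def)
      then show "dist (integral {x + a..x + b} g) (integral {x0 + a..x0 + b} g) < e"
        using \<delta>(2)[of "x+a" "x+b"] ab by (auto simp: dist_norm)
    qed (use \<delta> in auto)
  qed
  then show ?thesis by (simp add: continuous_on_eq_continuous_at)
qed

lemma nonzero_interval:
  fixes g :: "real \<Rightarrow> complex"
  assumes gi: "\<And>a b. g integrable_on {a..b}" and gn: "\<And>x. norm (g x) = 1"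
  shows "\<exists>a b. a \<le> b \<and> integral {a..b} g \<noteq> 0"
proof (rule ccontr)
  assume "\<not> ?thesis"
  then have z: "\<And>a b. a \<le> b \<Longrightarrow> integral {a..b} g = 0" by auto
  obtain N where N: "negligible N"
       "\<And>x e. \<lbrakk>x \<notin> N; 0 < e\<rbrakk> \<Longrightarrow>
               \<exists>d>0. \<forall>h. 0 < h \<and> h < d \<longrightarrow>
                         norm(integral (cbox x (x + h *\<^sub>R One)) g /\<^sub>R h ^ DIM(real) - g x) < e"
    using integrable_ccontinuous_explicit[of g] gi by (metis cbox_interval)
  have "N \<noteq> UNIV" using N(1) open_not_negligible[of UNIV] by auto
  then obtain x where x: "x \<notin> N" by auto
  obtain d where d: "d > 0" "\<And>h. 0 < h \<and> h < d \<Longrightarrow>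
        norm(integral (cbox x (x + h *\<^sub>R One)) g /\<^sub>R h ^ DIM(real) - g x) < 1/2"
    using N(2)[OF x, of "1/2"] by auto
  have "norm(integral {x..x + d/2} g /\<^sub>R (d/2) - g x) < 1/2"
    using d(2)[of "d/2"] d(1) by simp
  then show False using z[of x "x + d/2"] d(1) gn[of x] by simp
qed


theorem lemma4:
  fixes f :: "real \<Rightarrow> real"
  assumes "f \<in> borel_measurable lebesgue"
    and "AE p in (lebesgue :: (real \<times> real) measure).
           f (fst p + snd p) - f (fst p) - f (snd p) \<in> {pi * of_int m | m. True}"
  shows "\<exists>(c::real) (k::real \<Rightarrow> real). (\<forall>x. k x \<in> {pi * of_int m | m. True}) \<and>
           (AE x in lebesgue. f x = c * x + k x)"
proof -
  define g where "g x = exp (\<i> * complex_of_real (2 * f x))" for x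
  have gn: "norm (g x) = 1" for x unfolding g_def by simp
  have gm: "g \<in> borel_measurable lebesgue" unfolding g_def using assms(1) by measurable
  have gi: "g integrable_on {a..b}" for a b
    by (rule g_integrable) (use gm gn in auto)
  have "AE p in lborel. f (fst p + snd p) - f (fst p) - f (snd p) \<in> {pi * of_int m | m. True}"
    using assms(2) by (simp add: AE_completion_iff)
  then have "AE p in (lborel \<Otimes>\<^sub>M lborel :: (real \<times> real) measure). f (fst p + snd p) - f (fst p) - f (snd p) \<in> {pi * of_int m | m. True}"
    by (subst lborel_prod) assumption
  then have "AE x in lborel. AE y in lborel. f (x + y) - f x - f y \<in> {pi * of_int m | m. True}"
    using lborel_pair.AE_pair by fastforce
  then have "AE x in lebesgue. AE y in lebesgue. f (x + y) - f x - f y \<in> {pi * of_int m | m. True}"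
    by (simp add: AE_completion_iff)
  note ae = this
  have inner: "AE y in lebesgue. g (x + y) = g x * g y"
    if "AE y in lebesgue. f (x + y) - f x - f y \<in> {pi * of_int m | m. True}" for x
    using that by (rule eventually_mono) (unfold g_def, blast intro: key_exp)
  from ae have "AE x in lebesgue. AE y in lebesgue. g (x + y) = g x * g y"
    by (rule eventually_mono) (rule inner)
  then obtain N0 where N0: "negligible N0" "\<And>x. x \<notin> N0 \<Longrightarrow> AE y in lebesgue. g (x + y) = g x * g y"
    unfolding eventually_ae_filter_negligible by blast
  have shift: "integral {x+a..x+b} g = g x * integral {a..b} g" if x: "x \<notin> N0" for x a b
  proof -
    obtain Nx where Nx: "negligible Nx" "\<And>y. y \<notin> Nx \<Longrightarrow> g (x + y) = g x * g y"
      using N0(2)[OF x] unfolding eventually_ae_filter_negligible by blast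
    have "integral {a..b} (\<lambda>y. g x * g y) = integral {a..b} (\<lambda>y. g (x + y))"
      by (rule integral_spike[OF Nx(1)]) (use Nx(2) in auto)
    also have "\<dots> = integral {a..b} (g \<circ> (+) x)" by (simp add: comp_def)
    also have "\<dots> = integral {a+x..b+x} g" by (rule integral_shift_Icc_real)
    finally show ?thesis by (simp add: add.commute)
  qed
  obtain a b where ab: "a \<le> b" "integral {a..b} g \<noteq> 0"
    using nonzero_interval[OF gi gn] by blast
  define C where "C = integral {a..b} g"
  define G where "G x = integral {x+a..x+b} g / C" for x
  have Gc: "continuous_on UNIV G"
    unfolding G_def using ab(2) by (intro continuous_intros cont_window gi ab(1)) (auto simp: C_def)
  have Gg: "G x = g x" if "x \<notin> N0" for x
    using shift[OF that, of a b] ab(2) unfolding G_def C_def by simp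
  have GgAE: "AE x in lebesgue. G x = g x"
    unfolding eventually_ae_filter_negligible using N0(1) Gg by blast
  have GnAE: "AE x in lebesgue. norm (G x) = 1"
    using GgAE by (rule eventually_mono) (simp add: gn)
  have Gnc: "continuous_on UNIV (\<lambda>x. norm (G x))" using Gc by (rule continuous_on_norm)
  have Gn: "norm (G x) = 1" for x
    using cont_ae_eq[of "\<lambda>x. norm (G x)" "\<lambda>x. 1" x, OF Gnc continuous_on_const GnAE] .
  have Gcx: "continuous_on UNIV (\<lambda>y. G (x + y))" for x
    by (rule continuous_on_compose2[OF Gc]) (auto intro!: continuous_intros)
  have GAE: "AE x in lebesgue. \<forall>y. G (x + y) = G x * G y"
  proof -
    have "AE x in lebesgue. x \<notin> N0"
      unfolding eventually_ae_filter_negligible using N0(1) by blast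
    then show ?thesis using GgAE
    proof (elim AE_mp, intro AE_I2 impI allI)
      fix x y assume x: "x \<notin> N0" and Gx: "G x = g x"
      have "AE y in lebesgue. G (x + y) = G x * G y"
        using N0(2)[OF x] GgAE ae_translate[OF GgAE, of x]
        by (elim AE_mp, intro AE_I2 impI) (simp add: Gx)
      moreover have c2: "continuous_on UNIV (\<lambda>y. G x * G y)" using Gc by (intro continuous_intros)
      ultimately show "G (x + y) = G x * G y"
        using cont_ae_eq[of "\<lambda>y. G (x+y)" "\<lambda>y. G x * G y" y, OF Gcx c2] by blast
    qed
  qed
  have Gmul: "G (x + y) = G x * G y" for x y
  proof -
    from GAE have "AE x in lebesgue. G (x + y) = G x * G y" by auto
    moreover have "continuous_on UNIV (\<lambda>x. G (x + y))"
      by (rule continuous_on_compose2[OF Gc]) (auto intro!: continuous_intros)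
    moreover have c2: "continuous_on UNIV (\<lambda>x. G x * G y)" using Gc by (intro continuous_intros)
    ultimately show ?thesis
      using cont_ae_eq[of "\<lambda>x. G (x+y)" "\<lambda>x. G x * G y" x] by blast
  qed
  have G0: "G 0 = 1"
  proof -
    have "G 0 * 1 = G 0 * G 0" using Gmul[of 0 0] by simp
    moreover have "G 0 \<noteq> 0" using Gn[of 0] by auto
    ultimately show ?thesis by (metis mult_left_cancel)
  qed
  have Gnz: "G z \<noteq> 0" if "z \<in> UNIV" for z using Gn[of z] by auto
  have ctr: "contractible (UNIV::real set)" by (simp add: convex_imp_contractible)
  obtain L where L: "continuous_on UNIV L" "\<And>x. G x = exp (L x)"
  proof -
    note r = continuous_logarithm_on_contractible[where S=UNIV and f=G]
    obtain L0 where "continuous_on UNIV L0" "\<And>x. x \<in> UNIV \<Longrightarrow> G x = exp (L0 x)"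
      using r[OF Gc ctr Gnz] by blast
    then show thesis using that by blast
  qed
  define M where "M x = L x - L 0" for x
  have Mc: "continuous_on UNIV M" unfolding M_def using L(1) by (intro continuous_intros)
  have GM: "G x = exp (M x)" for x
    unfolding M_def exp_diff using L(2)[of x] L(2)[of 0] G0 by simp
  have M0: "M 0 = 0" unfolding M_def by simp
  have Madd: "M (x + y) = M x + M y" for x y
  proof -
    define F where "F y = (M (x + y) - M x - M y) / (2 * of_real pi * \<i>)" for y
    have Fint: "\<exists>n::int. F y = of_int n" for y
    proof -
      have "exp (M (x+y)) = exp (M x + M y)" using Gmul[of x y] by (simp add: GM exp_add)
      then obtain n :: int where n: "M (x+y) = M x + M y + of_int (2 * n) * pi * \<i>" by (auto simp: exp_eq)
      then have "F y = of_int n" unfolding F_def by (simp add: field_simps)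
      then show ?thesis by blast
    qed
    have Fc: "continuous_on UNIV F" unfolding F_def
      by (intro continuous_intros continuous_on_compose2[OF Mc]) auto
    have "F constant_on UNIV"
    proof (rule continuous_discrete_range_constant[OF connected_UNIV Fc])
      fix u :: real
      show "\<exists>e>0. \<forall>y. y \<in> UNIV \<and> F y \<noteq> F u \<longrightarrow> e \<le> norm (F y - F u)"
      proof (intro exI[of _ 1] conjI allI impI)
        fix y assume yu: "y \<in> UNIV \<and> F y \<noteq> F u"
        obtain m n :: int where mn: "F y = of_int m" "F u = of_int n" using Fint by metis
        then have "m \<noteq> n" using yu by auto
        then have "1 \<le> \<bar>m - n\<bar>" by simp
        moreover have "norm (F y - F u) = of_int \<bar>m - n\<bar>"
          unfolding mn by (simp only: of_int_diff[symmetric] norm_of_int of_int_abs)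
        ultimately show "1 \<le> norm (F y - F u)" by simp
      qed simp
    qed
    then have "F y = F 0" by (auto simp: constant_on_def)
    then have "M (x+y) - M x = M y" using M0 unfolding F_def by simp
    then show ?thesis by (simp add: diff_eq_eq add.commute)
  qed
  have Mlin: "M x = of_real x * M 1" for x by (rule additive_linear[OF Madd Mc])
  have ReM: "Re (M x) = 0" for x
  proof -
    have "exp (Re (M x)) = 1" using Gn[of x] by (simp add: GM norm_exp_eq_Re)
    then show ?thesis by simp
  qed
  define \<alpha> where "\<alpha> = Im (M 1)"
  have M1: "M 1 = \<i> * of_real \<alpha>" using ReM[of 1] by (simp add: \<alpha>_def complex_eq_iff)
  have Gform: "G x = exp (\<i> * of_real (\<alpha> * x))" for x
    using GM[of x] Mlin[of x] M1 by (simp add: algebra_simps)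
  define c where "c = \<alpha> / 2"
  have good: "f x - c * x \<in> {pi * of_int m | m. True}" if "x \<notin> N0" for x
  proof -
    have "exp (\<i> * of_real (2 * f x)) = exp (\<i> * of_real (\<alpha> * x))"
      using Gg[OF that] Gform[of x] g_def by simp
    then obtain n::int where "\<i> * of_real (2 * f x) = \<i> * of_real (\<alpha> * x) + of_int (2*n) * pi * \<i>"
      by (auto simp: exp_eq)
    then have "Im (\<i> * of_real (2 * f x)) = Im (\<i> * of_real (\<alpha> * x) + of_int (2*n) * pi * \<i>)" by simp
    then have "2 * f x = \<alpha> * x + 2 * n * pi" by simp
    then have "f x - c * x = pi * of_int n" unfolding c_def by (simp add: algebra_simps)
    then show ?thesis by blast
  qed
  define k where "k x = (if f x - c * x \<in> {pi * of_int m | m. True} then f x - c * x else 0)" for x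
  show ?thesis
  proof (intro exI[of _ c] exI[of _ k] conjI allI)
    show "k x \<in> {pi * of_int m | m. True}" for x
      unfolding k_def by (auto intro: exI[of _ 0])
    have "\<forall>x. x \<notin> N0 \<longrightarrow> f x = c * x + k x" using good unfolding k_def by auto
    then show "AE x in lebesgue. f x = c * x + k x"
      unfolding eventually_ae_filter_negligible using N0(1) by blast
  qed
qed

end
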